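(* Let $p\ge2$ be an integer and let $(a_n)_{n\ge0}$ be the Patalan numbers of order $p$. Define $d_0=-1/p$ and $d_n=a_{n-1}$ for $n\ge1$, with generating function $D(x)=\sum_{n\ge0}d_nx^n=xA(x)-1/p$. Then $g(D(x))=x$, where $g(x)=\frac{1-(-px)^p}{p^2}$, and for every $n\ge2$, \[ d_n=(-1)^p\,p^{p-2}\,t^{(p)}_n , \] where $t^{(k)}_n$ are the truncated convolution powers of the sequence $(d_n)$.
   Context: For an integer $p\ge2$, the Patalan numbers of order $p$ are the coefficients $a_n$ of \[ A(x)=\sum_{n\ge0}a_nx^n=\frac{1-(1-p^2x)^{1/p}}{p\,x} \] (so $a_0=1$). For a sequence $(d_n)_{n\ge0}$ with generating function $D(x)$, set $d^{(k)}_n=[x^n]D(x)^k$ for $k\ge1$, $n\ge0$; the truncated convolution powers are defined recursively by $t^{(1)}_n=0$ for all $n$ and, for $k>1$, \[ t^{(k)}_n=\sum_{j=1}^{n-1}d_{n-j}\,d^{(k-1)}_j+d_0\,t^{(k-1)}_n \] (the sum being empty when $n\le1$). *)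

theory Defs
  imports "HOL-Computational_Algebra.Formal_Power_Series"
begin

text \<open>The formal power series (1 - p^2 x)^(1/p), via the generalized binomial series
  (1+y)^a = fps_binomial a composed with y = -p^2 x.\<close>
definition root_series :: "nat \<Rightarrow> real fps" where
  "root_series p = fps_compose (fps_binomial (1 / real p)) (fps_const (- ((real p) ^ 2)) * fps_X)"

text \<open>Patalan generating function A(x) = (1 - (1 - p^2 x)^(1/p)) / (p x).
  Division by x is the shift of coefficients (1 - root_series p has zero constant term).\<close>
definition patalan_fps :: "nat \<Rightarrow> real fps" where
  "patalan_fps p = fps_const (1 / real p) * fps_shift 1 (1 - root_series p)"

definition patalan :: "nat \<Rightarrow> nat \<Rightarrow> real" where
  "patalan p n = fps_nth (patalan_fps p) n"

definition dseq :: "nat \<Rightarrow> nat \<Rightarrow> real" where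
  "dseq p n = (if n = 0 then - 1 / real p else patalan p (n - 1))"

definition D_fps :: "nat \<Rightarrow> real fps" where
  "D_fps p = fps_X * patalan_fps p - fps_const (1 / real p)"

definition g_fps :: "nat \<Rightarrow> real fps \<Rightarrow> real fps" where
  "g_fps p y = fps_const (1 / (real p)^2) * (1 - (fps_const (- real p) * y) ^ p)"

text \<open>Truncated convolution powers t^(k)_n of a sequence d (k >= 1; value at k = 0 is irrelevant).\<close>
fun tconv :: "(nat \<Rightarrow> real) \<Rightarrow> nat \<Rightarrow> nat \<Rightarrow> real" where
  "tconv d 0 n = 0"
| "tconv d (Suc 0) n = 0"
| "tconv d (Suc (Suc k)) n =
     (\<Sum>j = 1..n - 1. d (n - j) * fps_nth (Abs_fps d ^ Suc k) j) + d 0 * tconv d (Suc k) n"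

end

theory Submission
  imports Defs
begin

lemma root0: "fps_nth (root_series p) 0 = 1"
  by (simp add: root_series_def fps_compose_nth)

lemma root_pow:
  assumes "p > 0"
  shows "root_series p ^ p = 1 - fps_const ((real p)^2) * fps_X"
proof -
  let ?c = "fps_const (- ((real p) ^ 2)) * fps_X"
  have c0: "fps_nth ?c 0 = 0" by simp
  have "root_series p ^ p = fps_binomial (1 / real p) ^ p oo ?c"
    unfolding root_series_def by (rule fps_compose_power[OF c0])
  also have "fps_binomial (1 / real p) ^ p = 1 + fps_X"
    using assms by (simp add: fps_binomial_power fps_binomial_1)
  also have "(1 + fps_X) oo ?c = 1 + ?c"
    by (simp add: fps_compose_add_distrib)
  also have "1 + ?c = 1 - fps_const ((real p)^2) * fps_X"
    by (metis diff_conv_add_uminus fps_const_neg mult_minus_left)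
  finally show ?thesis .
qed

lemma D_eq: "D_fps p = fps_const (- (1 / real p)) * root_series p"
proof -
  have "fps_X * fps_shift 1 (1 - root_series p) = 1 - root_series p"
  proof (rule fps_ext)
    fix n show "fps_nth (fps_X * fps_shift 1 (1 - root_series p)) n = fps_nth (1 - root_series p) n"
      by (cases n) (simp_all add: root0 fps_X_mult_nth)
  qed
  hence "D_fps p = fps_const (1 / real p) * (1 - root_series p) - fps_const (1 / real p)"
    unfolding D_fps_def patalan_fps_def by (metis mult.left_commute)
  also have "\<dots> = - (fps_const (1 / real p) * root_series p)" by (simp add: algebra_simps)
  also have "\<dots> = fps_const (- (1 / real p)) * root_series p" by (metis fps_const_neg mult_minus_left)
  finally show ?thesis .
qed

lemma part1: "Abs_fps (dseq p) = D_fps p"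
proof (rule fps_ext)
  fix n
  show "fps_nth (Abs_fps (dseq p)) n = fps_nth (D_fps p) n"
    by (cases n) (simp_all add: dseq_def D_fps_def patalan_def)
qed

lemma part2:
  assumes "p > 0"
  shows "g_fps p (D_fps p) = fps_X"
proof -
  have "fps_const (- real p) * D_fps p = root_series p"
    using assms by (simp only: D_eq mult.assoc[symmetric] fps_const_mult) simp
  hence "g_fps p (D_fps p) = fps_const (1 / (real p)^2) * (1 - (1 - fps_const ((real p)^2) * fps_X))"
    unfolding g_fps_def using root_pow[OF assms] by simp
  also have "\<dots> = (fps_const (1 / (real p)^2) * fps_const ((real p)^2)) * fps_X"
    by (simp add: mult.assoc)
  also have "fps_const (1 / (real p)^2) * fps_const ((real p)^2) = fps_const 1"
    using assms by simp
  finally show ?thesis by simp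
qed

lemma tconv_eq:
  assumes "n \<ge> 1"
  shows "tconv d (Suc k) n = fps_nth (Abs_fps d ^ Suc k) n - real (Suc k) * d 0 ^ k * d n"
proof (induction k)
  case 0
  then show ?case by simp
next
  case (Suc k)
  let ?G = "Abs_fps d ^ Suc k"
  have "fps_nth (Abs_fps d ^ Suc (Suc k)) n = fps_nth (?G * Abs_fps d) n"
    by (simp only: power_Suc2)
  also have "\<dots> = (\<Sum>i=0..n. fps_nth ?G i * d (n - i))"
    by (simp add: fps_mult_nth)
  also have "\<dots> = fps_nth ?G 0 * d n + (\<Sum>i=1..n. fps_nth ?G i * d (n - i))"
    by (simp add: sum.atLeast_Suc_atMost)
  also have "(\<Sum>i=1..n. fps_nth ?G i * d (n - i)) = (\<Sum>i=1..n-1. fps_nth ?G i * d (n - i)) + fps_nth ?G n * d 0"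
  proof -
    have "n = Suc (n - 1)" using assms by simp
    then have "(\<Sum>i=1..n. fps_nth ?G i * d (n - i)) = (\<Sum>i=1..Suc (n-1). fps_nth ?G i * d (n - i))" by simp
    also have "\<dots> = (\<Sum>i=1..n-1. fps_nth ?G i * d (n - i)) + fps_nth ?G (Suc (n-1)) * d (n - Suc (n-1))"
      by (rule trans[OF sum.cl_ivl_Suc]) simp
    finally show ?thesis using \<open>n = Suc (n - 1)\<close> by simp
  qed
  also have "fps_nth ?G 0 = d 0 ^ Suc k" by (simp add: fps_nth_power_0)
  finally have e: "fps_nth (Abs_fps d ^ Suc (Suc k)) n = d 0 ^ Suc k * d n + ((\<Sum>i=1..n-1. fps_nth ?G i * d (n - i)) + fps_nth ?G n * d 0)" .
  have "tconv d (Suc (Suc k)) n = (\<Sum>j = 1..n - 1. d (n - j) * fps_nth ?G j) + d 0 * tconv d (Suc k) n"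
    by simp
  also have "\<dots> = (\<Sum>j = 1..n - 1. fps_nth ?G j * d (n - j)) + d 0 * (fps_nth ?G n - real (Suc k) * d 0 ^ k * d n)"
    using Suc by (simp add: mult.commute)
  finally show ?case using e by (simp add: algebra_simps)
qed

lemma arith_final:
  fixes x d :: real and p :: nat
  assumes "x > 0" "p \<ge> 2"
  shows "d = (-1) ^ p * x ^ (p - 2) * (- x * (- 1 / x) ^ (p - 1) * d)"
proof -
  obtain m where pm: "p = Suc (Suc m)" using assms by (metis add_2_eq_Suc le_Suc_ex)
  have "(- 1 / x) ^ (Suc m) = (-1) ^ Suc m / x ^ Suc m" by (metis power_divide)
  hence "(-1) ^ p * x ^ (p - 2) * (- x * (- 1 / x) ^ (p - 1) * d)
      = ((-1) ^ Suc (Suc m) * (-1) * (-1) ^ Suc m) * (x ^ m * x / x ^ Suc m) * d"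
    by (simp add: pm)
  also have "(-1::real) ^ Suc (Suc m) * (-1) * (-1) ^ Suc m = 1"
    by (simp add: power_add[symmetric])
  also have "x ^ m * x / x ^ Suc m = 1" using assms by simp
  finally show ?thesis by simp
qed

theorem mainTheorem11:
  fixes p :: nat
  assumes "p \<ge> 2"
  shows "Abs_fps (dseq p) = D_fps p
    \<and> g_fps p (D_fps p) = fps_X
    \<and> (\<forall>n\<ge>2. dseq p n = (-1) ^ p * (real p) ^ (p - 2) * tconv (dseq p) p n)"
proof -
  have p0: "p > 0" using assms by simp
  have g: "g_fps p (D_fps p) = fps_X" by (rule part2[OF p0])
  have "\<forall>n\<ge>2. dseq p n = (-1) ^ p * (real p) ^ (p - 2) * tconv (dseq p) p n"
  proof (intro allI impI)
    fix n :: nat assume n: "n \<ge> 2"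
    have "fps_const (- real p) * D_fps p = root_series p"
      using p0 by (simp only: D_eq mult.assoc[symmetric] fps_const_mult) simp
    hence "(fps_const (- real p) * D_fps p) ^ p = 1 - fps_const ((real p)^2) * fps_X"
      using root_pow[OF p0] by simp
    hence "fps_const ((- real p) ^ p) * D_fps p ^ p = 1 - fps_const ((real p)^2) * fps_X"
      by (simp add: power_mult_distrib fps_const_power)
    hence "fps_nth (fps_const ((- real p) ^ p) * D_fps p ^ p) n = 0" using n by simp
    hence Dn: "fps_nth (D_fps p ^ p) n = 0" using p0 by simp
    have "tconv (dseq p) p n = fps_nth (Abs_fps (dseq p) ^ p) n - real p * dseq p 0 ^ (p - 1) * dseq p n"
    proof -
      obtain q where q: "p = Suc q" using p0 gr0_conv_Suc by blast
      have "tconv (dseq p) (Suc q) n = fps_nth (Abs_fps (dseq p) ^ Suc q) n - real (Suc q) * dseq p 0 ^ q * dseq p n"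
        by (rule tconv_eq) (use n in simp)
      thus ?thesis unfolding q by simp
    qed
    also have "\<dots> = - real p * (- 1 / real p) ^ (p - 1) * dseq p n"
      using Dn by (simp add: part1 dseq_def)
    finally have t: "tconv (dseq p) p n = - real p * (- 1 / real p) ^ (p - 1) * dseq p n" .
    show "dseq p n = (-1) ^ p * (real p) ^ (p - 2) * tconv (dseq p) p n"
      unfolding t by (rule arith_final) (simp_all add: p0 assms)
  qed
  thus ?thesis using part1 g by simp
qed

end
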